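(* Let $G$ be a finite simple graph without isolated vertices. Then the non-cover complex $\mathcal{NC}(G)$ is $(|V(G)|-i\gamma(G)-1)$-collapsible.
   Context: For a finite simple graph $G$, a cover of $G$ is a set $W\subseteq V(G)$ such that $V(G)\setminus W$ is an independent set (i.e. $W$ contains an endpoint of every edge). The non-cover complex $\mathcal{NC}(G)$ is the simplicial complex on $V(G)$ whose faces are all sets $W\subseteq V(G)$ that are not covers of $G$ (equivalently, $V(G)\setminus W$ contains both endpoints of some edge). For $A,D\subseteq V(G)$, $D$ dominates $A$ if every $v\in A$ has a neighbor in $D$; $\gamma(G;A)$ is the minimum size of a set dominating $A$. The independent domination number is $i\gamma(G)=\max\{\gamma(G;I): I \text{ an independent set of } G\}$ (with $i\gamma(G)=\infty$ if $G$ has an isolated vertex). For a finite simplicial complex $X$, a face $\sigma$ is free if exactly one facet of $X$ contains $\sigma$; an elementary $d$-collapse deletes all faces containing a given free face of size at most $d$; $X$ is $d$-collapsible if the void complex can be obtained from $X$ by a finite sequence of elementary $d$-collapses. *)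

theory Defs
  imports Main "HOL-Library.Extended_Nat"
begin

definition simple_graph :: "'a set \<Rightarrow> ('a \<Rightarrow> 'a \<Rightarrow> bool) \<Rightarrow> bool" where
  "simple_graph V E \<longleftrightarrow> finite V \<and> (\<forall>u v. E u v \<longrightarrow> u \<in> V \<and> v \<in> V)
     \<and> (\<forall>u v. E u v \<longrightarrow> E v u) \<and> (\<forall>u. \<not> E u u)"

definition has_isolated_vertex :: "'a set \<Rightarrow> ('a \<Rightarrow> 'a \<Rightarrow> bool) \<Rightarrow> bool" where
  "has_isolated_vertex V E \<longleftrightarrow> (\<exists>v\<in>V. \<forall>u. \<not> E v u)"

definition independent :: "'a set \<Rightarrow> ('a \<Rightarrow> 'a \<Rightarrow> bool) \<Rightarrow> 'a set \<Rightarrow> bool" where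
  "independent V E I \<longleftrightarrow> I \<subseteq> V \<and> (\<forall>u\<in>I. \<forall>v\<in>I. \<not> E u v)"

definition is_cover :: "'a set \<Rightarrow> ('a \<Rightarrow> 'a \<Rightarrow> bool) \<Rightarrow> 'a set \<Rightarrow> bool" where
  "is_cover V E W \<longleftrightarrow> W \<subseteq> V \<and> independent V E (V - W)"

definition non_cover_complex :: "'a set \<Rightarrow> ('a \<Rightarrow> 'a \<Rightarrow> bool) \<Rightarrow> 'a set set" where
  "non_cover_complex V E = {W. W \<subseteq> V \<and> \<not> is_cover V E W}"

definition dominates :: "('a \<Rightarrow> 'a \<Rightarrow> bool) \<Rightarrow> 'a set \<Rightarrow> 'a set \<Rightarrow> bool" where
  "dominates E D A \<longleftrightarrow> (\<forall>v\<in>A. \<exists>u\<in>D. E v u)"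

definition dom_number :: "'a set \<Rightarrow> ('a \<Rightarrow> 'a \<Rightarrow> bool) \<Rightarrow> 'a set \<Rightarrow> nat" where
  "dom_number V E A = (LEAST k. \<exists>D. D \<subseteq> V \<and> card D = k \<and> dominates E D A)"

definition ind_dom_number :: "'a set \<Rightarrow> ('a \<Rightarrow> 'a \<Rightarrow> bool) \<Rightarrow> enat" where
  "ind_dom_number V E =
     (if has_isolated_vertex V E then \<infinity>
      else enat (Max {dom_number V E I | I. independent V E I}))"

(* simplicial complexes as sets of (finite) faces *)
definition facet :: "'a set set \<Rightarrow> 'a set \<Rightarrow> bool" where
  "facet X F \<longleftrightarrow> F \<in> X \<and> (\<forall>G\<in>X. F \<subseteq> G \<longrightarrow> G = F)"

definition free_face :: "'a set set \<Rightarrow> 'a set \<Rightarrow> bool" where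
  "free_face X \<sigma> \<longleftrightarrow> \<sigma> \<in> X \<and> (\<exists>!F. facet X F \<and> \<sigma> \<subseteq> F)"

definition elementary_collapse :: "int \<Rightarrow> 'a set set \<Rightarrow> 'a set set \<Rightarrow> bool" where
  "elementary_collapse d X Y \<longleftrightarrow>
     (\<exists>\<sigma>. free_face X \<sigma> \<and> int (card \<sigma>) \<le> d \<and> Y = {\<tau> \<in> X. \<not> \<sigma> \<subseteq> \<tau>})"

inductive d_collapsible :: "int \<Rightarrow> 'a set set \<Rightarrow> bool" where
  void: "d_collapsible d {}"
| step: "elementary_collapse d X Y \<Longrightarrow> d_collapsible d Y \<Longrightarrow> d_collapsible d X"

end

theory Submission
  imports Defs
begin

lemma collapsible_mono:
  assumes "d_collapsible d X" "d \<le> d'"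
  shows "d_collapsible d' X"
  using assms
proof (induction rule: d_collapsible.induct)
  case (void d)
  show ?case by (rule d_collapsible.void)
next
  case (step d X Y)
  then have "elementary_collapse d' X Y"
    unfolding elementary_collapse_def by fastforce
  then show ?case using step by (blast intro: d_collapsible.step)
qed

lemma collapsible_Pow:
  assumes "0 \<le> d"
  shows "d_collapsible d (Pow A)"
proof -
  have fA: "facet (Pow A) A" unfolding facet_def by auto
  have "free_face (Pow A) {}"
    unfolding free_face_def
  proof (intro conjI)
    show "{} \<in> Pow A" by simp
    show "\<exists>!F. facet (Pow A) F \<and> {} \<subseteq> F"
    proof (rule ex1I[of _ A])
      show "facet (Pow A) A \<and> {} \<subseteq> A" using fA by simp
      fix F assume "facet (Pow A) F \<and> {} \<subseteq> F"
      then show "F = A" unfolding facet_def by auto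
    qed
  qed
  then have "elementary_collapse d (Pow A) {}"
    unfolding elementary_collapse_def using assms
    by (intro exI[of _ "{}"]) auto
  then show ?thesis by (blast intro: d_collapsible.step d_collapsible.void)
qed

lemma card_insert_le1: "card (insert v s) \<le> card s + 1"
  by (cases "finite s") (auto simp: card_insert_if)

lemma lift:
  assumes "d_collapsible e L" "\<forall>\<tau>\<in>L. v \<notin> \<tau>"
    and "d_collapsible (e+1) D" "\<forall>\<tau>\<in>D. v \<notin> \<tau>"
  shows "d_collapsible (e+1) (D \<union> insert v ` L)"
  using assms
proof (induction rule: d_collapsible.induct)
  case (void d)
  then show ?case by simp
next
  case (step d L L')
  from step.hyps(1) obtain \<sigma> where fs: "free_face L \<sigma>" and c: "int (card \<sigma>) \<le> d"
    and L': "L' = {\<tau> \<in> L. \<not> \<sigma> \<subseteq> \<tau>}"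
    unfolding elementary_collapse_def by blast
  have vL: "\<forall>\<tau>\<in>L'. v \<notin> \<tau>" using step.prems L' by auto
  have IH: "d_collapsible (d+1) (D \<union> insert v ` L')"
    using step.IH vL step.prems by blast
  let ?X = "D \<union> insert v ` L"
  from fs have sL: "\<sigma> \<in> L" and ex: "\<exists>!F. facet L F \<and> \<sigma> \<subseteq> F"
    unfolding free_face_def by auto
  then obtain G0 where G0: "facet L G0" "\<sigma> \<subseteq> G0"
    and G0u: "\<And>F. facet L F \<and> \<sigma> \<subseteq> F \<Longrightarrow> F = G0" by blast
  have vs: "v \<notin> \<sigma>" using sL step.prems by auto
  have vG0: "v \<notin> G0" using G0(1) step.prems unfolding facet_def by auto
  have fF0: "facet ?X (insert v G0)"
    unfolding facet_def
  proof (intro conjI ballI impI)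
    show "insert v G0 \<in> ?X" using G0(1) unfolding facet_def by auto
    fix H assume H: "H \<in> ?X" "insert v G0 \<subseteq> H"
    then have "v \<in> H" by auto
    then have "H \<notin> D" using step.prems by auto
    then obtain \<tau> where t: "\<tau> \<in> L" "H = insert v \<tau>" using H by auto
    have vt: "v \<notin> \<tau>" using t step.prems by auto
    have "G0 \<subseteq> \<tau>" using H(2) t vG0 by auto
    then have "\<tau> = G0" using G0(1) t(1) unfolding facet_def by auto
    then show "H = insert v G0" using t by simp
  qed
  have "free_face ?X (insert v \<sigma>)"
    unfolding free_face_def
  proof (intro conjI)
    show "insert v \<sigma> \<in> ?X" using sL by auto
    show "\<exists>!F. facet ?X F \<and> insert v \<sigma> \<subseteq> F"
    proof (rule ex1I[of _ "insert v G0"])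
      show "facet ?X (insert v G0) \<and> insert v \<sigma> \<subseteq> insert v G0" using fF0 G0 by auto
      fix F assume F: "facet ?X F \<and> insert v \<sigma> \<subseteq> F"
      then have "F \<in> ?X" "v \<in> F" unfolding facet_def by auto
      then have "F \<notin> D" using step.prems by auto
      then obtain \<tau> where t: "\<tau> \<in> L" "F = insert v \<tau>" using \<open>F \<in> ?X\<close> by auto
      have vt: "v \<notin> \<tau>" using t step.prems by auto
      have "facet L \<tau>"
        unfolding facet_def
      proof (intro conjI ballI impI)
        show "\<tau> \<in> L" by fact
        fix H assume "H \<in> L" "\<tau> \<subseteq> H"
        then have "insert v H \<in> ?X" "F \<subseteq> insert v H" using t by auto
        then have "insert v H = F" using F unfolding facet_def by auto
        moreover have "v \<notin> H" using \<open>H \<in> L\<close> step.prems by auto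
        ultimately show "H = \<tau>" using t vt by (metis insert_ident)
      qed
      moreover have "\<sigma> \<subseteq> \<tau>" using F t vs by auto
      ultimately have "\<tau> = G0" using G0u by blast
      then show "F = insert v G0" using t by simp
    qed
  qed
  moreover have "int (card (insert v \<sigma>)) \<le> d + 1"
    using c card_insert_le1[of v \<sigma>] by linarith
  moreover have "D \<union> insert v ` L' = {\<tau> \<in> ?X. \<not> insert v \<sigma> \<subseteq> \<tau>}"
  proof (rule set_eqI)
    fix x
    show "x \<in> D \<union> insert v ` L' \<longleftrightarrow> x \<in> {\<tau> \<in> ?X. \<not> insert v \<sigma> \<subseteq> \<tau>}"
    proof
      assume "x \<in> D \<union> insert v ` L'"
      then show "x \<in> {\<tau> \<in> ?X. \<not> insert v \<sigma> \<subseteq> \<tau>}"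
      proof
        assume "x \<in> D" then show ?thesis using step.prems by auto
      next
        assume "x \<in> insert v ` L'"
        then obtain \<tau> where "\<tau> \<in> L" "\<not> \<sigma> \<subseteq> \<tau>" "x = insert v \<tau>" using L' by auto
        then show ?thesis using vs by auto
      qed
    next
      assume x: "x \<in> {\<tau> \<in> ?X. \<not> insert v \<sigma> \<subseteq> \<tau>}"
      show "x \<in> D \<union> insert v ` L'"
      proof (cases "x \<in> D")
        case False
        then obtain \<tau> where "\<tau> \<in> L" "x = insert v \<tau>" using x by auto
        moreover have "v \<notin> \<tau>" using calculation step.prems by auto
        ultimately show ?thesis using x L' vs by auto
      qed simp
    qed
  qed
  ultimately have "elementary_collapse (d+1) ?X (D \<union> insert v ` L')"
    unfolding elementary_collapse_def by blast
  then show ?case using IH by (blast intro: d_collapsible.step)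
qed

lemma split_collapse:
  assumes "d_collapsible (d - 1) {\<tau>. v \<notin> \<tau> \<and> insert v \<tau> \<in> X}"
    and "d_collapsible d {\<tau> \<in> X. v \<notin> \<tau>}"
  shows "d_collapsible d X"
proof -
  have "X = {\<tau> \<in> X. v \<notin> \<tau>} \<union> insert v ` {\<tau>. v \<notin> \<tau> \<and> insert v \<tau> \<in> X}"
  proof (rule set_eqI, rule iffI)
    fix x assume "x \<in> X"
    then show "x \<in> {\<tau> \<in> X. v \<notin> \<tau>} \<union> insert v ` {\<tau>. v \<notin> \<tau> \<and> insert v \<tau> \<in> X}"
      by (cases "v \<in> x") (auto intro!: image_eqI[of _ _ "x - {v}"] simp: insert_absorb)
  qed auto
  moreover have "d_collapsible ((d-1)+1) ({\<tau> \<in> X. v \<notin> \<tau>} \<union> insert v ` {\<tau>. v \<notin> \<tau> \<and> insert v \<tau> \<in> X})"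
    by (rule lift) (use assms in auto)
  ultimately show ?thesis by simp
qed


definition sdom :: "('a \<Rightarrow> 'a \<Rightarrow> bool) \<Rightarrow> 'a set \<Rightarrow> 'a set \<Rightarrow> bool" where
  "sdom E D A \<longleftrightarrow> (\<forall>x\<in>A. x \<in> D \<or> (\<exists>u\<in>D. E x u))"

definition cnum :: "'a set \<Rightarrow> ('a \<Rightarrow> 'a \<Rightarrow> bool) \<Rightarrow> 'a set \<Rightarrow> nat" where
  "cnum V E A = (LEAST k. \<exists>D. D \<subseteq> V \<and> card D = k \<and> sdom E D A)"

definition gnum :: "'a set \<Rightarrow> ('a \<Rightarrow> 'a \<Rightarrow> bool) \<Rightarrow> 'a set \<Rightarrow> nat" where
  "gnum V E S = Max {cnum V E I | I. independent V E I \<and> I \<inter> S = {}}"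

definition NCL :: "'a set \<Rightarrow> ('a \<Rightarrow> 'a \<Rightarrow> bool) \<Rightarrow> 'a set \<Rightarrow> 'a set set" where
  "NCL V E S = {W. W \<subseteq> V \<and> ((\<exists>u\<in>V-W. \<exists>w\<in>V-W. E u w) \<or> (\<exists>u\<in>V-W. u \<in> S))}"

lemma cnum_le: "D \<subseteq> V \<Longrightarrow> sdom E D A \<Longrightarrow> cnum V E A \<le> card D"
  unfolding cnum_def by (rule Least_le) blast

lemma cnum_ex:
  assumes "A \<subseteq> V"
  shows "\<exists>D. D \<subseteq> V \<and> card D = cnum V E A \<and> sdom E D A"
proof -
  have "\<exists>k D. D \<subseteq> V \<and> card D = k \<and> sdom E D A"
    using assms by (intro exI[of _ "card A"] exI[of _ A]) (auto simp: sdom_def)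
  then show ?thesis unfolding cnum_def by (rule LeastI_ex)
qed

lemma cnum_le_card: "A \<subseteq> V \<Longrightarrow> cnum V E A \<le> card A"
  by (rule cnum_le) (auto simp: sdom_def)

lemma cnum_mono:
  assumes "V' \<subseteq> V" "\<And>a b. E' a b \<Longrightarrow> E a b" "A \<subseteq> V'"
  shows "cnum V E A \<le> cnum V' E' A"
proof -
  obtain D where D: "D \<subseteq> V'" "card D = cnum V' E' A" "sdom E' D A"
    using cnum_ex[OF assms(3)] by blast
  have "sdom E D A" using D(3) assms(2) unfolding sdom_def by blast
  then show ?thesis using cnum_le[of D V E A] D assms(1) by auto
qed

lemma gnum_fin:
  assumes "finite V"
  shows "finite {cnum V E I | I. independent V E I \<and> I \<inter> S = {}}"
    and "{cnum V E I | I. independent V E I \<and> I \<inter> S = {}} \<noteq> {}"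
proof -
  have "{cnum V E I | I. independent V E I \<and> I \<inter> S = {}} \<subseteq> (\<lambda>I. cnum V E I) ` Pow V"
    unfolding independent_def by auto
  then show "finite {cnum V E I | I. independent V E I \<and> I \<inter> S = {}}"
    using assms by (meson finite_Pow_iff finite_imageI finite_subset)
  have "independent V E {}" unfolding independent_def by auto
  then show "{cnum V E I | I. independent V E I \<and> I \<inter> S = {}} \<noteq> {}" by blast
qed

lemma gnum_ge:
  "finite V \<Longrightarrow> independent V E I \<Longrightarrow> I \<inter> S = {} \<Longrightarrow> cnum V E I \<le> gnum V E S"
  unfolding gnum_def by (rule Max_ge) (auto intro: gnum_fin)

lemma gnum_in:
  assumes "finite V"
  shows "\<exists>I. independent V E I \<and> I \<inter> S = {} \<and> gnum V E S = cnum V E I"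
proof -
  have "gnum V E S \<in> {cnum V E I | I. independent V E I \<and> I \<inter> S = {}}"
    unfolding gnum_def using gnum_fin[OF assms] by (rule Max_in)
  then show ?thesis by auto
qed


lemma main:
  assumes "simple_graph V E" "S \<subseteq> V"
  shows "d_collapsible (int (card V) - int (gnum V E S) - 1) (NCL V E S)"
  using assms
proof (induction "card V" arbitrary: V E S rule: less_induct)
  case less
  note G = less.prems(1)
  have fin: "finite V" and Ein: "\<And>u w. E u w \<Longrightarrow> u \<in> V \<and> w \<in> V"
    and sym: "\<And>u w. E u w \<Longrightarrow> E w u" and irr: "\<And>u. \<not> E u u"
    using G unfolding simple_graph_def by auto
  let ?d = "int (card V) - int (gnum V E S) - 1"
  show ?case
  proof (cases "S = {}")
    case False
    then obtain v where vS: "v \<in> S" by blast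
    hence vV: "v \<in> V" using less.prems(2) by auto
    define V' where "V' = V - {v}"
    define E' where "E' = (\<lambda>a b. E a b \<and> a \<noteq> v \<and> b \<noteq> v)"
    define S' where "S' = S - {v}"
    have G': "simple_graph V' E'" using G unfolding simple_graph_def V'_def E'_def by auto
    have S': "S' \<subseteq> V'" using less.prems(2) unfolding S'_def V'_def by auto
    have cardV': "card V' = card V - 1" unfolding V'_def using vV fin by simp
    have cpos: "card V \<ge> 1" using vV fin by (metis One_nat_def Suc_leI card_gt_0_iff empty_iff)
    have cV': "card V' < card V" using cardV' cpos by simp
    have IH: "d_collapsible (int (card V') - int (gnum V' E' S') - 1) (NCL V' E' S')"
      using less.hyps[OF cV' G' S'] .
    obtain I0 where I0: "independent V E I0" "I0 \<inter> S = {}" "gnum V E S = cnum V E I0"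
      using gnum_in[OF fin] by blast
    have I0V': "I0 \<subseteq> V'" using I0 vS unfolding independent_def V'_def by auto
    have "cnum V E I0 \<le> card I0" using I0(1) cnum_le_card unfolding independent_def by blast
    moreover have "card I0 \<le> card V'" using I0V' fin card_mono V'_def by (metis finite_Diff)
    ultimately have g_le: "gnum V E S \<le> card V - 1" using I0 cardV' by simp
    have "independent V' E' I0" using I0(1) I0V' unfolding independent_def E'_def by auto
    moreover have "I0 \<inter> S' = {}" using I0(2) S'_def by auto
    ultimately have "cnum V' E' I0 \<le> gnum V' E' S'" using gnum_ge[of V' E' I0 S'] fin V'_def by auto
    moreover have "cnum V E I0 \<le> cnum V' E' I0"
      by (rule cnum_mono) (use I0V' in \<open>auto simp: V'_def E'_def\<close>)
    ultimately have g_le2: "gnum V E S \<le> gnum V' E' S'" using I0 by simp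
    have link: "{\<tau>. v \<notin> \<tau> \<and> insert v \<tau> \<in> NCL V E S} = NCL V' E' S'"
      unfolding NCL_def V'_def E'_def S'_def using vV by auto
    have del: "{\<tau> \<in> NCL V E S. v \<notin> \<tau>} = Pow V'"
      unfolding NCL_def V'_def using vS vV by auto
    show ?thesis
    proof (rule split_collapse[where v=v])
      show "d_collapsible (?d - 1) {\<tau>. v \<notin> \<tau> \<and> insert v \<tau> \<in> NCL V E S}"
        unfolding link by (rule collapsible_mono[OF IH]) (use g_le2 cardV' cpos in \<open>auto\<close>)
      show "d_collapsible ?d {\<tau> \<in> NCL V E S. v \<notin> \<tau>}"
        unfolding del by (rule collapsible_Pow) (use g_le cpos in \<open>auto\<close>)
    qed
  next
    case S0: True
    show ?thesis
    proof (cases "\<exists>u w. E u w")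
      case False
      have "NCL V E S = {}" using False S0 unfolding NCL_def by auto
      then show ?thesis by (simp add: d_collapsible.void)
    next
      case True
      then obtain a b where ab: "E a b" by blast
      obtain I0 where I0: "independent V E I0" "I0 \<inter> S = {}" "gnum V E S = cnum V E I0"
        using gnum_in[OF fin] by blast
      have "I0 \<noteq> V" using I0(1) ab Ein unfolding independent_def by blast
      then obtain v where vV: "v \<in> V" and vI: "v \<notin> I0" using I0(1) unfolding independent_def by blast
      define V' where "V' = V - {v}"
      define E' where "E' = (\<lambda>a b. E a b \<and> a \<noteq> v \<and> b \<noteq> v)"
      define N where "N = {u \<in> V'. E v u}"
      have G': "simple_graph V' E'" using G unfolding simple_graph_def V'_def E'_def by auto
      have N: "N \<subseteq> V'" unfolding N_def by auto
      have cardV': "card V' = card V - 1" unfolding V'_def using vV fin by simp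
      have cpos: "card V \<ge> 1" using vV fin by (metis One_nat_def Suc_leI card_gt_0_iff empty_iff)
      have cV': "card V' < card V" using cardV' cpos by simp
      have IHD: "d_collapsible (int (card V') - int (gnum V' E' N) - 1) (NCL V' E' N)"
        using less.hyps[OF cV' G' N] .
      have IHL: "d_collapsible (int (card V') - int (gnum V' E' {}) - 1) (NCL V' E' {})"
        using less.hyps[OF cV' G'] by simp
      have I0V': "I0 \<subseteq> V'" using I0 vI unfolding independent_def V'_def by auto
      have "independent V' E' I0" using I0(1) I0V' unfolding independent_def E'_def by auto
      then have "cnum V' E' I0 \<le> gnum V' E' {}" using gnum_ge[of V' E' I0 "{}"] fin V'_def by auto
      moreover have "cnum V E I0 \<le> cnum V' E' I0"
        by (rule cnum_mono) (use I0V' in \<open>auto simp: V'_def E'_def\<close>)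
      ultimately have gL: "gnum V E S \<le> gnum V' E' {}" using I0 by simp
      define I1 where "I1 = I0 - N"
      have I1V': "I1 \<subseteq> V'" using I0V' I1_def by auto
      have "independent V' E' I1" using I0(1) I1V' unfolding independent_def E'_def I1_def by auto
      moreover have "I1 \<inter> N = {}" unfolding I1_def by auto
      ultimately have c1: "cnum V' E' I1 \<le> gnum V' E' N" using gnum_ge[of V' E' I1 N] fin V'_def by auto
      obtain D1 where D1: "D1 \<subseteq> V'" "card D1 = cnum V' E' I1" "sdom E' D1 I1"
        using cnum_ex[OF I1V'] by blast
      have "sdom E (insert v D1) I0"
        unfolding sdom_def
      proof
        fix x assume x: "x \<in> I0"
        show "x \<in> insert v D1 \<or> (\<exists>u\<in>insert v D1. E x u)"
        proof (cases "x \<in> N")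
          case True
          then have "E x v" unfolding N_def using sym by auto
          then show ?thesis by auto
        next
          case False
          then have "x \<in> I1" using x I1_def by auto
          then show ?thesis using D1(3) unfolding sdom_def E'_def by blast
        qed
      qed
      moreover have "insert v D1 \<subseteq> V" using D1(1) vV V'_def by auto
      ultimately have "cnum V E I0 \<le> card (insert v D1)" by (rule cnum_le[rotated])
      also have "\<dots> \<le> card D1 + 1" by (rule card_insert_le1)
      finally have gD: "gnum V E S \<le> gnum V' E' N + 1" using I0 D1 c1 by simp
      have link: "{\<tau>. v \<notin> \<tau> \<and> insert v \<tau> \<in> NCL V E S} = NCL V' E' {}"
        unfolding NCL_def V'_def E'_def using vV S0 by auto
      have del: "{\<tau> \<in> NCL V E S. v \<notin> \<tau>} = NCL V' E' N"
      proof (rule set_eqI)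
        fix W
        show "W \<in> {\<tau> \<in> NCL V E S. v \<notin> \<tau>} \<longleftrightarrow> W \<in> NCL V' E' N"
        proof
          assume W: "W \<in> {\<tau> \<in> NCL V E S. v \<notin> \<tau>}"
          then have WV: "W \<subseteq> V'" "v \<notin> W" unfolding NCL_def V'_def by auto
          from W obtain u w where uw: "u \<in> V - W" "w \<in> V - W" "E u w"
            unfolding NCL_def using S0 by auto
          show "W \<in> NCL V' E' N"
          proof (cases "u = v \<or> w = v")
            case True
            then show ?thesis
            proof
              assume "u = v"
              then have "w \<noteq> v" using uw irr by auto
              then have "w \<in> V' - W" "w \<in> N" using uw \<open>u = v\<close> unfolding V'_def N_def by auto
              then show ?thesis using WV unfolding NCL_def by blast
            next
              assume "w = v"
              then have "u \<noteq> v" using uw irr by auto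
              then have "u \<in> V' - W" "u \<in> N" using uw \<open>w = v\<close> sym unfolding V'_def N_def by auto
              then show ?thesis using WV unfolding NCL_def by blast
            qed
          next
            case False
            then have "u \<in> V' - W" "w \<in> V' - W" "E' u w" using uw unfolding V'_def E'_def by auto
            then show ?thesis using WV unfolding NCL_def by blast
          qed
        next
          assume W: "W \<in> NCL V' E' N"
          then have WV: "W \<subseteq> V'" "v \<notin> W" unfolding NCL_def V'_def by auto
          from W have "(\<exists>u\<in>V'-W. \<exists>w\<in>V'-W. E' u w) \<or> (\<exists>u\<in>V'-W. u \<in> N)"
            unfolding NCL_def by auto
          then have "\<exists>u\<in>V-W. \<exists>w\<in>V-W. E u w"
          proof
            assume "\<exists>u\<in>V'-W. \<exists>w\<in>V'-W. E' u w"
            then show ?thesis unfolding V'_def E'_def by blast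
          next
            assume "\<exists>u\<in>V'-W. u \<in> N"
            then obtain u where "u \<in> V' - W" "E v u" unfolding N_def by auto
            then show ?thesis using vV WV unfolding V'_def by blast
          qed
          then show "W \<in> {\<tau> \<in> NCL V E S. v \<notin> \<tau>}" using WV unfolding NCL_def V'_def by auto
        qed
      qed
      show ?thesis
      proof (rule split_collapse[where v=v])
        show "d_collapsible (?d - 1) {\<tau>. v \<notin> \<tau> \<and> insert v \<tau> \<in> NCL V E S}"
          unfolding link by (rule collapsible_mono[OF IHL]) (use gL cardV' cpos in \<open>auto\<close>)
        show "d_collapsible ?d {\<tau> \<in> NCL V E S. v \<notin> \<tau>}"
          unfolding del by (rule collapsible_mono[OF IHD]) (use gD cardV' cpos in \<open>auto\<close>)
      qed
    qed
  qed
qed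


lemma dom_eq_cnum:
  assumes G: "simple_graph V E" and ni: "\<not> has_isolated_vertex V E"
    and I: "independent V E I"
  shows "dom_number V E I = cnum V E I"
proof -
  have fin: "finite V" and Ein: "\<And>u w. E u w \<Longrightarrow> u \<in> V \<and> w \<in> V"
    using G unfolding simple_graph_def by auto
  have IV: "I \<subseteq> V" using I unfolding independent_def by auto
  define h where "h = (\<lambda>x. if x \<in> I then (SOME u. E x u) else x)"
  have hE: "E x (h x)" if "x \<in> I" for x
  proof -
    have "\<exists>u. E x u" using ni that IV unfolding has_isolated_vertex_def by auto
    then show ?thesis unfolding h_def using that by (auto intro: someI_ex)
  qed
  have hV: "h ` D \<subseteq> V" if "D \<subseteq> V" for D
    using that hE Ein unfolding h_def by auto
  have hdom: "dominates E (h ` D) I" if "sdom E D I" for D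
    unfolding dominates_def
  proof
    fix x assume x: "x \<in> I"
    then have "x \<in> D \<or> (\<exists>u\<in>D. E x u)" using that unfolding sdom_def by auto
    then show "\<exists>u\<in>h ` D. E x u"
    proof
      assume "x \<in> D" then show ?thesis using hE[OF x] by auto
    next
      assume "\<exists>u\<in>D. E x u"
      then obtain u where u: "u \<in> D" "E x u" by auto
      then have "u \<notin> I" using I x unfolding independent_def by auto
      then have "h u = u" unfolding h_def by simp
      then show ?thesis using u by force
    qed
  qed
  obtain D where D: "D \<subseteq> V" "card D = cnum V E I" "sdom E D I" using cnum_ex[OF IV] by blast
  have "dom_number V E I \<le> card (h ` D)"
    unfolding dom_number_def by (rule Least_le) (use hV[OF D(1)] hdom[OF D(3)] in blast)
  also have "\<dots> \<le> card D" using D(1) fin by (meson card_image_le finite_subset)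
  finally have le1: "dom_number V E I \<le> cnum V E I" using D by simp
  have "sdom E I I" unfolding sdom_def by auto
  then have ex: "\<exists>k D. D \<subseteq> V \<and> card D = k \<and> dominates E D I"
    using hV[OF IV] hdom by blast
  obtain D2 where D2: "D2 \<subseteq> V" "card D2 = dom_number V E I" "dominates E D2 I"
    using LeastI_ex[OF ex] unfolding dom_number_def by blast
  have "sdom E D2 I" using D2(3) unfolding sdom_def dominates_def by auto
  then have "cnum V E I \<le> dom_number V E I" using cnum_le[OF D2(1)] D2(2) by simp
  with le1 show ?thesis by simp
qed

theorem theorem1p2:
  fixes V :: "'a set" and E :: "'a \<Rightarrow> 'a \<Rightarrow> bool"
  assumes "simple_graph V E"
    and "\<not> has_isolated_vertex V E"
  shows "d_collapsible (int (card V) - int (the_enat (ind_dom_number V E)) - 1)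
           (non_cover_complex V E)"
proof -
  have "{dom_number V E I | I. independent V E I} = {cnum V E I | I. independent V E I \<and> I \<inter> {} = {}}"
    using dom_eq_cnum[OF assms] by (auto, metis)
  then have "the_enat (ind_dom_number V E) = gnum V E {}"
    unfolding ind_dom_number_def gnum_def using assms(2) by simp
  moreover have "non_cover_complex V E = NCL V E {}"
    unfolding non_cover_complex_def NCL_def is_cover_def independent_def by auto
  ultimately show ?thesis using main[OF assms(1)] by simp
qed

end
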